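(* Fix integers $n,d\in\mathbb{N}$, let $\mathcal{A}$ be either the Čech class or the Alpha class of convex sets in $\mathbb{R}^d$, and let $\mathcal{Q}$ be a probability distribution on $(\mathbb{R}^d)^n$. Every graph $\Gamma$ that is feasible (for $d$, $n$, $\mathcal{A}$, $\mathcal{Q}$) is isomorphic to $\mathcal{G}(\mathcal{V},r,\mathcal{A})$ for some collection $\mathcal{V}$ of $n$ points in the closed unit ball $\mathbb{B}^d\subset\mathbb{R}^d$ and $r=1/n$.
   Context: For a finite collection $F=\{A_j : j\in I\}$ of nonempty convex sets, its nerve is $\mathrm{Nrv}(F)=\{\sigma\subseteq I : \bigcap_{j\in\sigma}A_j\neq\varnothing\}$. For a finite point set $\mathcal{V}=\{v_1,\dots,v_n\}\subset\mathbb{R}^d$ and $r>0$, let $B_{v,r}=v+r\mathbb{B}^d$ be the closed ball of radius $r$ about $v$ and $C_v=\{x\in\mathbb{R}^d:\|x-v\|\le\|x-u\|\ \forall u\in\mathcal{V}\}$ the Voronoi cell of $v$. The Čech complex is the nerve of $\{B_{v,r}: v\in\mathcal{V}\}$; the Alpha complex is the nerve of $\{B_{v,r}\cap C_v : v\in\mathcal{V}\}$. The graph $\mathcal{G}(\mathcal{V},r,\mathcal{A})$ is the 1-skeleton of the corresponding complex: vertex set $\mathcal{V}$, with $\{v_i,v_j\}$ an edge iff the two sets associated with $v_i$ and $v_j$ intersect. Two graphs are isomorphic if there is a bijection of vertex sets preserving adjacency in both directions. Given $d,n$, a class $\mathcal{A}$, and a distribution $\mathcal{Q}$ of random vectors $\mathbf{V}=(V_1,\dots,V_n)$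 in $(\mathbb{R}^d)^n$, a graph $\Gamma$ is called feasible if for some $r>0$, $\Pr\{\mathcal{G}(\mathbf{V},r,\mathcal{A})\cong\Gamma\}>0$ when $\mathbf{V}\sim\mathcal{Q}$. *)

theory Defs
  imports "HOL-Analysis.Analysis" "HOL-Probability.Probability"
begin

datatype convex_class = Cech | Alpha

text \<open>Voronoi cell of the i-th point of the configuration v (index type 'n = {1..n}).\<close>
definition voronoi_cell :: "(real^'d)^'n \<Rightarrow> 'n \<Rightarrow> (real^'d) set" where
  "voronoi_cell v i = {x. \<forall>j. dist x (v$i) \<le> dist x (v$j)}"

definition assoc_set :: "convex_class \<Rightarrow> (real^'d)^'n \<Rightarrow> real \<Rightarrow> 'n \<Rightarrow> (real^'d) set" where
  "assoc_set A v r i = (case A of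
      Cech \<Rightarrow> cball (v$i) r
    | Alpha \<Rightarrow> cball (v$i) r \<inter> voronoi_cell v i)"

text \<open>A (simple) graph is a pair (vertex set, set of edges), edges being 2-element sets.
  The graph G(V,r,A): the 1-skeleton of the nerve; vertices are the indices of the points.\<close>
definition geom_graph :: "(real^'d)^'n \<Rightarrow> real \<Rightarrow> convex_class \<Rightarrow> 'n set \<times> 'n set set" where
  "geom_graph v r A = (UNIV,
     {{i, j} | i j. i \<noteq> j \<and> assoc_set A v r i \<inter> assoc_set A v r j \<noteq> {}})"

definition graph_iso :: "'a set \<times> 'a set set \<Rightarrow> 'b set \<times> 'b set set \<Rightarrow> bool" where
  "graph_iso G H = (\<exists>f. bij_betw f (fst G) (fst H) \<and>
     (\<forall>x\<in>fst G. \<forall>y\<in>fst G. {x, y} \<in> snd G \<longleftrightarrow> {f x, f y} \<in> snd H))"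

definition feasible :: "((real^'d)^'n) measure \<Rightarrow> convex_class \<Rightarrow> 'a set \<times> 'a set set \<Rightarrow> bool" where
  "feasible Q A \<Gamma> = (\<exists>r>0. measure Q {v \<in> space Q. graph_iso (geom_graph v r A) \<Gamma>} > 0)"

end

theory Submission
  imports Defs
begin

lemma ball_merge:
  fixes c1 c2 :: "'v::real_normed_vector"
  assumes "R1 \<ge> 0" "R2 \<ge> 0" "d \<ge> 0" "dist c1 c2 \<le> R1 + R2 + d"
  shows "\<exists>c. dist c c1 \<le> R2 + d/2 \<and> dist c c2 \<le> R1 + d/2"
proof (cases "dist c1 c2 \<le> R1 + d/2")
  case True
  then show ?thesis using assms by (intro exI[of _ c1]) auto
next
  case False
  define D where "D = dist c1 c2"
  define t where "t = D - R1 - d/2"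
  have D: "D > 0" using False assms D_def by auto
  have t0: "0 \<le> t" "t \<le> D" using False assms unfolding t_def D_def by auto
  define c where "c = c1 + (t/D) *\<^sub>R (c2 - c1)"
  have n: "norm (c2 - c1) = D" by (simp add: D_def dist_norm norm_minus_commute)
  have "dist c c1 = t" unfolding c_def dist_norm using D t0 n by simp
  moreover have "c - c2 = (1 - t/D) *\<^sub>R (c1 - c2)" unfolding c_def by (simp add: algebra_simps)
  then have "dist c c2 = (1 - t/D) * D" using D t0 n
    by (simp add: dist_norm norm_minus_commute)
  then have "dist c c2 = D - t" using D by (simp add: algebra_simps)
  ultimately show ?thesis using assms unfolding t_def D_def by (intro exI[of _ c]) auto
qed

lemma class_ball:
  fixes u :: "'i \<Rightarrow> 'v::real_normed_vector"
  assumes fin: "finite K" and ne: "K \<noteq> {}"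
    and conn: "\<forall>x\<in>K. \<forall>y\<in>K. (x,y) \<in> Rel\<^sup>*"
    and clos: "\<forall>x\<in>K. \<forall>y. (x,y) \<in> Rel \<longrightarrow> y \<in> K"
    and edge: "\<forall>x\<in>K. \<forall>y\<in>K. (x,y) \<in> Rel \<longrightarrow> dist (u x) (u y) \<le> d"
    and d: "d \<ge> 0"
  shows "\<exists>c. \<forall>i\<in>K. dist c (u i) \<le> (real (card K) - 1) * d / 2"
proof -
  have step: "(\<exists>x\<in>S. \<exists>y. y \<notin> S \<and> (x,y) \<in> Rel) \<or> z \<in> S"
    if "(a,z) \<in> Rel\<^sup>*" "a \<in> S" for a z S
    using that by (induction rule: rtrancl_induct) auto
  have main: "1 \<le> m \<longrightarrow> m \<le> card K \<longrightarrow> (\<exists>S\<subseteq>K. card S = m \<and>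
      (\<exists>c. \<forall>i\<in>S. dist c (u i) \<le> (real m - 1) * d / 2))" for m
  proof (induction m)
    case 0 then show ?case by simp
  next
    case (Suc m)
    show ?case
    proof (intro impI)
      assume h: "1 \<le> Suc m" "Suc m \<le> card K"
      show "\<exists>S\<subseteq>K. card S = Suc m \<and> (\<exists>c. \<forall>i\<in>S. dist c (u i) \<le> (real (Suc m) - 1) * d / 2)"
      proof (cases "m = 0")
        case True
        obtain k where "k \<in> K" using ne by auto
        then show ?thesis using True by (intro exI[of _ "{k}"]) auto
      next
        case False
        then obtain S c where S: "S \<subseteq> K" "card S = m"
          and c: "\<forall>i\<in>S. dist c (u i) \<le> (real m - 1) * d / 2" using Suc h by auto
        have "S \<noteq> K" using S h by auto
        then obtain z where z: "z \<in> K" "z \<notin> S" using S by auto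
        obtain a where a: "a \<in> S" using S False by (metis card.empty ex_in_conv)
        obtain x y where xy: "x \<in> S" "y \<notin> S" "(x,y) \<in> Rel"
          using step[of a z S] conn a z S by blast
        have yK: "y \<in> K" using clos xy S by blast
        have "dist c (u y) \<le> dist c (u x) + dist (u x) (u y)" by (rule dist_triangle)
        also have "\<dots> \<le> (real m - 1) * d / 2 + 0 + d" using c xy edge S yK by force
        finally have cy: "dist c (u y) \<le> (real m - 1) * d / 2 + 0 + d" .
        have m1: "(real m - 1) * d / 2 \<ge> 0" using False d by simp
        obtain c' where c': "dist c' c \<le> 0 + d/2" "dist c' (u y) \<le> (real m - 1)*d/2 + d/2"
          using ball_merge[OF m1 _ d cy] by auto
        have fS: "finite S" using S fin finite_subset by blast
        show ?thesis
        proof (intro exI[of _ "insert y S"] conjI exI[of _ c'])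
          show "insert y S \<subseteq> K" using S yK by auto
          show "card (insert y S) = Suc m" using fS xy S by simp
          show "\<forall>i\<in>insert y S. dist c' (u i) \<le> (real (Suc m) - 1) * d / 2"
          proof
            fix i assume "i \<in> insert y S"
            then show "dist c' (u i) \<le> (real (Suc m) - 1) * d / 2"
            proof
              assume "i = y" then show ?thesis using c' by (simp add: field_simps)
            next
              assume "i \<in> S"
              then have "dist c' (u i) \<le> dist c' c + dist c (u i)" by (simp add: dist_triangle)
              also have "\<dots> \<le> d/2 + (real m - 1) * d / 2" using c' c \<open>i \<in> S\<close> by force
              finally show ?thesis by (simp add: field_simps)
            qed
          qed
        qed
      qed
    qed
  qed
  have "1 \<le> card K" using fin ne by (simp add: Suc_leI card_gt_0_iff)
  then obtain S c where "S \<subseteq> K" "card S = card K" "\<forall>i\<in>S. dist c (u i) \<le> (real (card K) - 1) * d / 2"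
    using main[of "card K"] by auto
  moreover have "S = K" using calculation fin by (metis card_subset_eq)
  ultimately show ?thesis by auto
qed


lemma arrange:
  fixes v :: "'i::finite \<Rightarrow> 'v::real_inner" and e :: 'v
  assumes lam: "lam > 0" and r: "r > 0" and dl: "2*lam*r < d" and e: "norm e = 1"
  defines "Rel \<equiv> {(i,j). dist (v i) (v j) \<le> 2*r}"
  shows "\<exists>b c. (\<forall>i j. (i,j) \<in> Rel\<^sup>* \<longrightarrow> b i = b j)
     \<and> (\<forall>i j. (i,j) \<notin> Rel\<^sup>* \<longrightarrow> dist (lam *\<^sub>R v i + b i) (lam *\<^sub>R v j + b j) > 2*lam*r)
     \<and> (\<forall>i. dist c (lam *\<^sub>R v i + b i) \<le> (real CARD('i) - 1) * d / 2)"
proof -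
  define E where "E = Rel\<^sup>*"
  have symR: "sym Rel" by (auto simp: sym_def Rel_def dist_commute)
  have symE: "(j,i) \<in> E" if "(i,j) \<in> E" for i j
    using sym_rtrancl[OF symR] that unfolding E_def sym_def by blast
  have transE: "(i,k) \<in> E" if "(i,j) \<in> E" "(j,k) \<in> E" for i j k
    using that unfolding E_def by (meson rtrancl_trans)
  have d0: "d \<ge> 0" using dl lam r by (smt (verit) mult_pos_pos)
  define P where "P I \<longleftrightarrow> (\<exists>b. (\<forall>i\<in>I. \<forall>j\<in>I. (i,j) \<in> E \<longrightarrow> b i = b j)
     \<and> (\<forall>i\<in>I. \<forall>j\<in>I. (i,j) \<notin> E \<longrightarrow> dist (lam *\<^sub>R v i + b i) (lam *\<^sub>R v j + b j) > 2*lam*r)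
     \<and> (I \<noteq> {} \<longrightarrow> (\<exists>c. \<forall>i\<in>I. dist c (lam *\<^sub>R v i + b i) \<le> (real (card I) - 1) * d / 2)))"
    for I :: "'i set"
  have claim: "(\<forall>i\<in>I. \<forall>j. (i,j) \<in> E \<longrightarrow> j \<in> I) \<longrightarrow> P I" for I
  proof (induction "card I" arbitrary: I rule: less_induct)
    case less
    show ?case
    proof
      assume cl: "\<forall>i\<in>I. \<forall>j. (i,j) \<in> E \<longrightarrow> j \<in> I"
      show "P I"
      proof (cases "I = {}")
        case True then show ?thesis unfolding P_def by auto
      next
        case False
        obtain k where k: "k \<in> I" using False by auto
        define K where "K = {j. (k,j) \<in> E}"
        have KI: "K \<subseteq> I" using cl k by (auto simp: K_def)
        have kK: "k \<in> K" by (simp add: K_def E_def)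
        define I' where "I' = I - K"
        have cl': "\<forall>i\<in>I'. \<forall>j. (i,j) \<in> E \<longrightarrow> j \<in> I'"
        proof (intro ballI allI impI)
          fix i j assume ij: "i \<in> I'" "(i,j) \<in> E"
          have "j \<in> I" using cl ij I'_def by auto
          moreover have "j \<notin> K"
          proof
            assume "j \<in> K"
            then have "(k,i) \<in> E" using transE[OF _ symE[OF ij(2)]] K_def by auto
            then show False using ij I'_def K_def by auto
          qed
          ultimately show "j \<in> I'" using I'_def by auto
        qed
        have finK: "finite K" by simp
        have cardI: "card I = card I' + card K"
          using KI unfolding I'_def by (simp add: card_Diff_subset card_mono)
        have cK: "card K \<ge> 1" using kK finK by (metis One_nat_def Suc_leI card_gt_0_iff empty_iff)
        have Kconn: "\<forall>x\<in>K. \<forall>y\<in>K. (x,y) \<in> Rel\<^sup>*"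
          using symE transE unfolding K_def E_def by blast
        have Kclos: "\<forall>x\<in>K. \<forall>y. (x,y) \<in> Rel \<longrightarrow> y \<in> K"
          unfolding K_def E_def by auto
        have KE: "(i,j) \<in> E" if "i \<in> K" "j \<in> K" for i j using Kconn that E_def by auto
        have Kedge: "\<forall>x\<in>K. \<forall>y\<in>K. (x,y) \<in> Rel \<longrightarrow>
            dist (lam *\<^sub>R v x + \<beta>) (lam *\<^sub>R v y + \<beta>) \<le> d" for \<beta>
        proof (intro ballI impI)
          fix x y assume "x \<in> K" "y \<in> K" "(x,y) \<in> Rel"
          then have h1: "dist (v x) (v y) \<le> 2*r" by (auto simp: Rel_def)
          have h2: "dist (lam *\<^sub>R v x + \<beta>) (lam *\<^sub>R v y + \<beta>) = lam * dist (v x) (v y)"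
            using lam by (simp add: dist_norm flip: scaleR_diff_right)
          have "lam * dist (v x) (v y) \<le> lam * (2*r)"
            using lam h1 by (intro mult_left_mono) auto
          then show "dist (lam *\<^sub>R v x + \<beta>) (lam *\<^sub>R v y + \<beta>) \<le> d"
            using h2 dl by (simp add: mult.assoc mult.left_commute)
        qed
        obtain q0 where q0: "q0 \<in> K" "\<forall>i\<in>K. e \<bullet> v q0 \<le> e \<bullet> v i"
        proof -
          have "Min ((\<lambda>i. e \<bullet> v i) ` K) \<in> (\<lambda>i. e \<bullet> v i) ` K" using kK by (intro Min_in) auto
          then obtain q where "q \<in> K" "e \<bullet> v q = Min ((\<lambda>i. e \<bullet> v i) ` K)" by auto
          then show ?thesis using that by (metis Min_le finK finite_imageI image_eqI)
        qed
        show ?thesis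
        proof (cases "I' = {}")
          case True
          then have IK: "I = K" using KI I'_def by auto
          obtain c where c: "\<forall>i\<in>K. dist c (lam *\<^sub>R v i + 0) \<le> (real (card K) - 1) * d / 2"
            using class_ball[OF finK _ Kconn Kclos Kedge[of 0] d0] kK by blast
          show ?thesis unfolding P_def
            by (intro exI[of _ "\<lambda>_. 0"] conjI) (use IK KE c in auto)
        next
          case False
          have lt: "card I' < card I" using cardI cK by simp
          obtain b' where b1: "\<forall>i\<in>I'. \<forall>j\<in>I'. (i,j) \<in> E \<longrightarrow> b' i = b' j"
            and b2: "\<forall>i\<in>I'. \<forall>j\<in>I'. (i,j) \<notin> E \<longrightarrow> dist (lam *\<^sub>R v i + b' i) (lam *\<^sub>R v j + b' j) > 2*lam*r"
            and b3: "\<exists>c. \<forall>i\<in>I'. dist c (lam *\<^sub>R v i + b' i) \<le> (real (card I') - 1) * d / 2"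
            using less(1)[OF lt] cl' False unfolding P_def by blast
          define w' where "w' i = lam *\<^sub>R v i + b' i" for i
          obtain c1 where c1: "\<forall>i\<in>I'. dist c1 (w' i) \<le> (real (card I') - 1) * d / 2"
            using b3 w'_def by auto
          have finI': "finite I'" by simp
          obtain p where p: "p \<in> I'" "\<forall>i\<in>I'. e \<bullet> w' i \<le> e \<bullet> w' p"
          proof -
            have "Max ((\<lambda>i. e \<bullet> w' i) ` I') \<in> (\<lambda>i. e \<bullet> w' i) ` I'" using False by (intro Max_in) auto
            then obtain q where "q \<in> I'" "e \<bullet> w' q = Max ((\<lambda>i. e \<bullet> w' i) ` I')" by auto
            then show ?thesis using that by (metis Max_ge finI' finite_imageI image_eqI)
          qed
          define \<beta> where "\<beta> = w' p + d *\<^sub>R e - lam *\<^sub>R v q0"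
          define b where "b i = (if i \<in> K then \<beta> else b' i)" for i
          define w where "w i = lam *\<^sub>R v i + b i" for i
          obtain c2 where c2: "\<forall>i\<in>K. dist c2 (lam *\<^sub>R v i + \<beta>) \<le> (real (card K) - 1) * d / 2"
            using class_ball[OF finK _ Kconn Kclos Kedge[of \<beta>] d0] kK by blast
          have wK: "w i = lam *\<^sub>R v i + \<beta>" if "i \<in> K" for i using that by (simp add: w_def b_def)
          have wI': "w i = w' i" if "i \<in> I'" for i using that by (simp add: w_def b_def w'_def I'_def)
          have wq0: "w q0 = w' p + d *\<^sub>R e" using wK[OF q0(1)] by (simp add: \<beta>_def)
          have sep: "dist (w i) (w j) > 2*lam*r" if "i \<in> K" "j \<in> I'" for i j
          proof -
            have "e \<bullet> (w i - w j) = lam * (e \<bullet> v i - e \<bullet> v q0) + d + (e \<bullet> w' p - e \<bullet> w' j)"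
            proof -
              have ee: "e \<bullet> e = 1" using e by (metis power2_norm_eq_inner power_one)
              show ?thesis unfolding wK[OF that(1)] wI'[OF that(2)] \<beta>_def
                using ee by (simp add: inner_diff_right inner_add_right algebra_simps)
            qed
            also have "\<dots> \<ge> d" using lam q0 p that by (smt (verit) mult_nonneg_nonneg)
            finally have "e \<bullet> (w i - w j) \<ge> d" .
            moreover have "\<bar>e \<bullet> (w i - w j)\<bar> \<le> dist (w i) (w j)"
              using Cauchy_Schwarz_ineq2[of e "w i - w j"] e by (simp add: dist_norm)
            ultimately show ?thesis using dl by linarith
          qed
          have R1: "(real (card I') - 1) * d / 2 \<ge> 0" using False d0 finI'
            by (simp add: Suc_leI card_gt_0_iff)
          have R2: "(real (card K) - 1) * d / 2 \<ge> 0" using cK d0 by simp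
          have "dist c1 c2 \<le> dist c1 (w' p) + dist (w' p) (w q0) + dist (w q0) c2"
            by (meson dist_triangle order_trans add_right_mono)
          also have "\<dots> \<le> (real (card I') - 1) * d / 2 + d + (real (card K) - 1) * d / 2"
          proof (intro add_mono)
            show "dist c1 (w' p) \<le> (real (card I') - 1) * d / 2" using c1 p by auto
            show "dist (w' p) (w q0) \<le> d" unfolding wq0 using e d0 by (simp add: dist_norm)
            show "dist (w q0) c2 \<le> (real (card K) - 1) * d / 2"
              using c2 q0 wK[OF q0(1)] by (simp add: dist_commute)
          qed
          finally have dc: "dist c1 c2 \<le> (real (card I') - 1) * d / 2 + (real (card K) - 1) * d / 2 + d"
            by simp
          obtain c where c: "dist c c1 \<le> (real (card K) - 1) * d / 2 + d/2"
              "dist c c2 \<le> (real (card I') - 1) * d / 2 + d/2"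
            using ball_merge[OF R1 R2 d0 dc] by blast
          have tot: "(real (card I') - 1) * d / 2 + (real (card K) - 1) * d / 2 + d/2
              = (real (card I) - 1) * d / 2" using cardI by (simp add: field_simps)
          show ?thesis unfolding P_def
          proof (intro exI[of _ b] conjI impI)
            show "\<forall>i\<in>I. \<forall>j\<in>I. (i,j) \<in> E \<longrightarrow> b i = b j"
            proof (intro ballI impI)
              fix i j assume ij: "i \<in> I" "j \<in> I" "(i,j) \<in> E"
              show "b i = b j"
              proof (cases "i \<in> K")
                case True
                then have "j \<in> K" using ij transE K_def by auto
                then show ?thesis using True b_def by auto
              next
                case False
                then have "j \<notin> K" using ij transE symE K_def by blast
                then show ?thesis using False b1 ij b_def I'_def by auto
              qed
            qed
            show "\<forall>i\<in>I. \<forall>j\<in>I. (i,j) \<notin> E \<longrightarrow> dist (lam *\<^sub>R v i + b i) (lam *\<^sub>R v j + b j) > 2*lam*r"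
            proof (intro ballI impI)
              fix i j assume ij: "i \<in> I" "j \<in> I" "(i,j) \<notin> E"
              show "dist (lam *\<^sub>R v i + b i) (lam *\<^sub>R v j + b j) > 2*lam*r"
              proof (cases "i \<in> K"; cases "j \<in> K")
                assume "i \<in> K" "j \<in> K" then show ?thesis using KE ij by auto
              next
                assume "i \<in> K" "j \<notin> K" then show ?thesis using sep[of i j] ij I'_def w_def by auto
              next
                assume "i \<notin> K" "j \<in> K" then show ?thesis using sep[of j i] ij I'_def w_def
                  by (auto simp: dist_commute)
              next
                assume "i \<notin> K" "j \<notin> K" then show ?thesis using b2 ij I'_def w'_def wI' w_def by auto
              qed
            qed
            show "\<exists>c. \<forall>i\<in>I. dist c (lam *\<^sub>R v i + b i) \<le> (real (card I) - 1) * d / 2"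
            proof (intro exI[of _ c] ballI)
              fix i assume i: "i \<in> I"
              show "dist c (lam *\<^sub>R v i + b i) \<le> (real (card I) - 1) * d / 2"
              proof (cases "i \<in> K")
                case True
                have "dist c (w i) \<le> dist c c2 + dist c2 (w i)" by (rule dist_triangle)
                also have "\<dots> \<le> (real (card I') - 1) * d / 2 + d/2 + (real (card K) - 1) * d / 2"
                  using c c2 True wK by (intro add_mono) auto
                finally show ?thesis using tot w_def by simp
              next
                case False
                then have i': "i \<in> I'" using i I'_def by auto
                have "dist c (w i) \<le> dist c c1 + dist c1 (w i)" by (rule dist_triangle)
                also have "\<dots> \<le> (real (card K) - 1) * d / 2 + d/2 + (real (card I') - 1) * d / 2"
                  using c c1 i' wI' by (intro add_mono) auto
                finally show ?thesis using tot w_def by simp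
              qed
            qed
          qed
        qed
      qed
    qed
  qed
  have "P UNIV" using claim[of UNIV] by auto
  then obtain b c where "\<forall>i j. (i,j) \<in> E \<longrightarrow> b i = b j"
     "\<forall>i j. (i,j) \<notin> E \<longrightarrow> dist (lam *\<^sub>R v i + b i) (lam *\<^sub>R v j + b j) > 2*lam*r"
     "\<forall>i. dist c (lam *\<^sub>R v i + b i) \<le> (real CARD('i) - 1) * d / 2"
    unfolding P_def by auto
  then show ?thesis unfolding E_def by blast
qed


lemma assoc_sub: "assoc_set A v r i \<subseteq> cball (v$i) r"
  by (cases A) (auto simp: assoc_set_def)

lemma graph_transform:
  fixes u v :: "(real^'d)^'n" and b :: "'n \<Rightarrow> real^'d"
  assumes lam: "lam > 0" and r: "r > 0"
    and u: "\<And>i. u$i = lam *\<^sub>R v$i + b i"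
    and sep: "\<And>i j. b i \<noteq> b j \<Longrightarrow> dist (v$i) (v$j) > 2*r \<and> dist (u$i) (u$j) > 2*(lam*r)"
  shows "geom_graph u (lam*r) A = geom_graph v r A"
proof -
  have dscale: "dist (lam *\<^sub>R x + \<beta>) (lam *\<^sub>R y + \<beta>) = lam * dist x y" for x y :: "real^'d" and \<beta>
    using lam by (simp add: dist_norm flip: scaleR_diff_right)
  have cb: "dist (u$i) (lam *\<^sub>R x + b i) = lam * dist (v$i) x" for i x
    unfolding u by (rule dscale)
  have vor: "(\<forall>j. dist (lam *\<^sub>R x + b i) (u$i) \<le> dist (lam *\<^sub>R x + b i) (u$j))
      \<longleftrightarrow> (\<forall>j. dist x (v$i) \<le> dist x (v$j))" if xr: "dist (v$i) x \<le> r" for i x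
  proof -
    have "dist (lam *\<^sub>R x + b i) (u$i) \<le> dist (lam *\<^sub>R x + b i) (u$j)
      \<longleftrightarrow> dist x (v$i) \<le> dist x (v$j)" for j
    proof (cases "b i = b j")
      case True
      have "dist (lam *\<^sub>R x + b i) (u$j) = lam * dist x (v$j)"
        unfolding u True by (rule dscale)
      moreover have "dist (lam *\<^sub>R x + b i) (u$i) = lam * dist x (v$i)"
        unfolding u by (rule dscale)
      ultimately show ?thesis using lam by simp
    next
      case False
      from sep[OF False] have s1: "dist (v$i) (v$j) > 2*r" and s2: "dist (u$i) (u$j) > 2*(lam*r)" by auto
      have "dist (v$i) (v$j) \<le> dist (v$i) x + dist x (v$j)" by (rule dist_triangle)
      then have A1: "dist x (v$i) \<le> dist x (v$j)" using s1 xr by (simp add: dist_commute)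
      have c1: "dist (u$i) (lam *\<^sub>R x + b i) \<le> lam * r" using cb[of i x] xr lam by simp
      have "dist (u$i) (u$j) \<le> dist (u$i) (lam *\<^sub>R x + b i) + dist (lam *\<^sub>R x + b i) (u$j)"
        by (rule dist_triangle)
      then have A2: "dist (lam *\<^sub>R x + b i) (u$i) \<le> dist (lam *\<^sub>R x + b i) (u$j)"
        using s2 c1 by (simp add: dist_commute)
      show ?thesis using A1 A2 by simp
    qed
    then show ?thesis by blast
  qed
  have key: "lam *\<^sub>R x + b i \<in> assoc_set A u (lam*r) i \<longleftrightarrow> x \<in> assoc_set A v r i" for i x
  proof -
    have cbi: "lam *\<^sub>R x + b i \<in> cball (u$i) (lam*r) \<longleftrightarrow> x \<in> cball (v$i) r"
      using cb[of i x] lam by simp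
    show ?thesis
    proof (cases A)
      case Cech then show ?thesis using cbi by (simp add: assoc_set_def)
    next
      case Alpha
      show ?thesis using cbi vor[of i x] by (auto simp: assoc_set_def Alpha voronoi_cell_def)
    qed
  qed
  have inter: "(assoc_set A u (lam*r) i \<inter> assoc_set A u (lam*r) j \<noteq> {})
      \<longleftrightarrow> (assoc_set A v r i \<inter> assoc_set A v r j \<noteq> {})" for i j
  proof (cases "b i = b j")
    case True
    show ?thesis
    proof
      assume "assoc_set A u (lam*r) i \<inter> assoc_set A u (lam*r) j \<noteq> {}"
      then obtain y where y: "y \<in> assoc_set A u (lam*r) i" "y \<in> assoc_set A u (lam*r) j" by auto
      define x where "x = (1/lam) *\<^sub>R (y - b i)"
      have yx: "y = lam *\<^sub>R x + b i" using lam by (simp add: x_def)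
      have "x \<in> assoc_set A v r i" using key[of x i] y yx by simp
      moreover have "x \<in> assoc_set A v r j" using key[of x j] y yx True by simp
      ultimately show "assoc_set A v r i \<inter> assoc_set A v r j \<noteq> {}" by auto
    next
      assume "assoc_set A v r i \<inter> assoc_set A v r j \<noteq> {}"
      then obtain x where x: "x \<in> assoc_set A v r i" "x \<in> assoc_set A v r j" by auto
      have "lam *\<^sub>R x + b i \<in> assoc_set A u (lam*r) i" using key x by simp
      moreover have "lam *\<^sub>R x + b i \<in> assoc_set A u (lam*r) j" using key[of x j] x True by simp
      ultimately show "assoc_set A u (lam*r) i \<inter> assoc_set A u (lam*r) j \<noteq> {}" by auto
    qed
  next
    case False
    from sep[OF False] have s1: "dist (v$i) (v$j) > 2*r" and s2: "dist (u$i) (u$j) > 2*(lam*r)" by auto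
    have e1: "assoc_set A v r i \<inter> assoc_set A v r j = {}"
    proof (rule ccontr)
      assume "assoc_set A v r i \<inter> assoc_set A v r j \<noteq> {}"
      then obtain x where "x \<in> cball (v$i) r" "x \<in> cball (v$j) r" using assoc_sub by blast
      then have "dist (v$i) x \<le> r" "dist (v$j) x \<le> r" by auto
      moreover have "dist (v$i) (v$j) \<le> dist (v$i) x + dist (v$j) x" by (rule dist_triangle2)
      ultimately show False using s1 by simp
    qed
    have e2: "assoc_set A u (lam*r) i \<inter> assoc_set A u (lam*r) j = {}"
    proof (rule ccontr)
      assume "assoc_set A u (lam*r) i \<inter> assoc_set A u (lam*r) j \<noteq> {}"
      then obtain x where "x \<in> cball (u$i) (lam*r)" "x \<in> cball (u$j) (lam*r)" using assoc_sub by blast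
      then have "dist (u$i) x \<le> lam*r" "dist (u$j) x \<le> lam*r" by auto
      moreover have "dist (u$i) (u$j) \<le> dist (u$i) x + dist (u$j) x" by (rule dist_triangle2)
      ultimately show False using s2 by simp
    qed
    show ?thesis using e1 e2 by simp
  qed
  show ?thesis unfolding geom_graph_def using inter by simp
qed

theorem mainTheorem1:
  fixes Q :: "((real^'d)^'n) measure" and A :: convex_class and \<Gamma> :: "'a set \<times> 'a set set"
  assumes "prob_space Q" and "sets Q = sets borel" and "feasible Q A \<Gamma>"
  shows "\<exists>v :: (real^'d)^'n. (\<forall>i. v$i \<in> cball 0 1) \<and>
           graph_iso (geom_graph v (1 / real CARD('n)) A) \<Gamma>"
proof -
  obtain r where r: "r > 0" and m: "measure Q {v \<in> space Q. graph_iso (geom_graph v r A) \<Gamma>} > 0"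
    using assms(3) unfolding feasible_def by blast
  then obtain v0 :: "(real^'d)^'n" where v0: "graph_iso (geom_graph v0 r A) \<Gamma>"
  proof -
    have "{v \<in> space Q. graph_iso (geom_graph v r A) \<Gamma>} \<noteq> {}"
    proof
      assume "{v \<in> space Q. graph_iso (geom_graph v r A) \<Gamma>} = {}"
      then have "measure Q {v \<in> space Q. graph_iso (geom_graph v r A) \<Gamma>} = 0"
        by (simp only: measure_empty)
      then show False using m by linarith
    qed
    then obtain w :: "(real^'d)^'n" where "graph_iso (geom_graph w r A) \<Gamma>" by auto
    then show ?thesis by (rule that)
  qed
  define n where "n = real CARD('n)"
  have n1: "n \<ge> 1" unfolding n_def by (simp add: Suc_leI)
  define lam where "lam = 1 / (n * r)"
  have lam: "lam > 0" using n1 r by (simp add: lam_def)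
  have lr: "lam * r = 1 / n" using r n1 by (simp add: lam_def)
  define d where "d = 2/n + 2/(n*n)"
  have dl: "2*lam*r < d"
  proof -
    have "2*lam*r = 2/n" using lr by (simp add: mult.assoc)
    moreover have "2/(n*n) > 0" using n1 by simp
    ultimately show ?thesis by (simp add: d_def)
  qed
  obtain e :: "real^'d" where e: "norm e = 1" using vector_choose_size[of 1] by auto
  obtain b c where b1: "\<forall>i j. (i,j) \<in> {(i,j). dist (v0$i) (v0$j) \<le> 2*r}\<^sup>* \<longrightarrow> b i = b j"
    and b2: "\<forall>i j. (i,j) \<notin> {(i,j). dist (v0$i) (v0$j) \<le> 2*r}\<^sup>* \<longrightarrow>
        dist (lam *\<^sub>R v0$i + b i) (lam *\<^sub>R v0$j + b j) > 2*lam*r"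
    and b3: "\<forall>i. dist c (lam *\<^sub>R v0$i + b i) \<le> (real CARD('n) - 1) * d / 2"
    using arrange[OF lam r dl e, of "\<lambda>i. v0$i"] by blast
  define u :: "(real^'d)^'n" where "u = (\<chi> i. lam *\<^sub>R v0$i + (b i - c))"
  have u: "u$i = lam *\<^sub>R v0$i + (b i - c)" for i by (simp add: u_def)
  have sep: "dist (v0$i) (v0$j) > 2*r \<and> dist (u$i) (u$j) > 2*(lam*r)" if "b i - c \<noteq> b j - c" for i j
  proof -
    have nE: "(i,j) \<notin> {(i,j). dist (v0$i) (v0$j) \<le> 2*r}\<^sup>*" using b1 that by auto
    then have "dist (v0$i) (v0$j) > 2*r" by (metis (mono_tags, lifting) case_prodI mem_Collect_eq not_le r_into_rtrancl)
    moreover have "dist (u$i) (u$j) = dist (lam *\<^sub>R v0$i + b i) (lam *\<^sub>R v0$j + b j)"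
      unfolding u by (simp add: dist_norm algebra_simps)
    ultimately show ?thesis using b2 nE by (simp add: mult.assoc)
  qed
  have G: "geom_graph u (lam*r) A = geom_graph v0 r A"
    by (rule graph_transform[OF lam r u sep])
  have ball: "u$i \<in> cball 0 1" for i
  proof -
    have "norm (u$i) = dist c (lam *\<^sub>R v0$i + b i)" unfolding u by (simp add: dist_norm algebra_simps norm_minus_commute)
    also have "\<dots> \<le> (n - 1) * d / 2" using b3 n_def by simp
    also have "(n - 1) * d / 2 = (n*n - 1) / (n*n)" using n1 by (simp add: d_def field_simps)
    also have "\<dots> \<le> 1" using n1 by simp
    finally show ?thesis by simp
  qed
  show ?thesis
    by (intro exI[of _ u] conjI allI ball) (use G v0 lr n_def in simp)
qed

end
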